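(* Let $N\ge 2$, $\lambda\ne 0$, and for $x,p\in\mathbb{C}^N$ set $$L_k(x,p;\lambda)=I+\lambda^{-1}\begin{pmatrix}p_kx_k & -p_kx_k^2\\ p_k & -p_kx_k\end{pmatrix},\qquad T_N(x,p;\lambda)=L_N(x,p;\lambda)\cdots L_1(x,p;\lambda).$$ (a) Periodic case: if $\widetilde{x}\in\mathbb{C}^N$ satisfies $p_k=\frac{\lambda}{\widetilde{x}_k-x_k}+\frac{\lambda}{x_k-\widetilde{x}_{k-1}}$ for $k=1,\dots,N$ with $\widetilde x_0=\widetilde x_N$, $x_{N+1}=x_1$, then $$\frac{\prod_{k=1}^N(\widetilde{x}_k-x_{k+1})}{\prod_{k=1}^N(\widetilde{x}_k-x_k)}$$ is an eigenvalue of $T_N(x,p;\lambda)$. (b) Open-end case: if $\widetilde{x}\in\mathbb{C}^N$ satisfies $p_1=\frac{\lambda}{\widetilde{x}_1-x_1}$ and $p_k=\frac{\lambda}{\widetilde{x}_k-x_k}+\frac{\lambda}{x_k-\widetilde{x}_{k-1}}$ for $k=2,\dots,N$, then the $(2,1)$-entry of $T_N(x,p;\lambda)$ equals $$\frac{\prod_{k=1}^{N-1}(\widetilde{x}_k-x_{k+1})}{\prod_{k=1}^N(\widetilde{x}_k-x_k)}.$$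
   Context: $I$ is the $2\times2$ identity matrix. The relation between $(x,p)$ and $\widetilde x$ is the first half of the Bäcklund transformation $F_\lambda$ of the symmetric rational additive Toda-type system $\ddot x_k=-\dot x_k^2\big(\frac{1}{x_{k+1}-x_k}-\frac{1}{x_k-x_{k-1}}\big)$. *)

theory Defs
  imports "HOL-Analysis.Analysis"
begin

text \<open>Lax matrix L_k(x,p;lam) = I + lam^{-1} [[p_k x_k, -p_k x_k^2],[p_k, -p_k x_k]].
  Vectors x, p in C^N are modelled as functions nat => complex, indices 1..N used.\<close>
definition lax_L :: "(nat \<Rightarrow> complex) \<Rightarrow> (nat \<Rightarrow> complex) \<Rightarrow> complex \<Rightarrow> nat \<Rightarrow> complex^2^2" where
  "lax_L x p lam k = mat 1 +
     (\<chi> i j. inverse lam * (if i = 1 then (if j = 1 then p k * x k else - p k * (x k)^2)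
             else (if j = 1 then p k else - p k * x k)))"

fun monodromy :: "(nat \<Rightarrow> complex) \<Rightarrow> (nat \<Rightarrow> complex) \<Rightarrow> complex \<Rightarrow> nat \<Rightarrow> complex^2^2" where
  "monodromy x p lam 0 = mat 1"
| "monodromy x p lam (Suc n) = lax_L x p lam (Suc n) ** monodromy x p lam n"

definition is_eigenvalue :: "complex^2^2 \<Rightarrow> complex \<Rightarrow> bool" where
  "is_eigenvalue A mu \<longleftrightarrow> (\<exists>v. v \<noteq> 0 \<and> A *v v = mu *s v)"

end

theory Submission imports Defs begin

definition vv :: "complex \<Rightarrow> complex^2" where "vv a = (\<chi> i. if i = 1 then a else 1)"

lemma step:
  assumes "lam \<noteq> 0" "b \<noteq> x k" "x k \<noteq> a" "p k = lam / (b - x k) + lam / (x k - a)"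
  shows "lax_L x p lam k *v (c *s vv a) = (c * ((a - x k) / (b - x k))) *s vv b"
proof -
  define d1 where "d1 = b - x k"
  define d2 where "d2 = x k - a"
  have d: "d1 \<noteq> 0" "d2 \<noteq> 0" using assms unfolding d1_def d2_def by auto
  have bb: "b = x k + d1" "a = x k - d2" unfolding d1_def d2_def by auto
  have e1: "p k = lam * (1/d1 + 1/d2)" using assms(1,4) unfolding d1_def d2_def by (simp add: field_simps)
  show ?thesis
    unfolding vec_eq_iff forall_2 lax_L_def vv_def bb
    using d assms(1)
    by (simp add: matrix_vector_mult_def sum_2 mat_def e1 field_simps power2_eq_square)
qed

lemma step0:
  assumes "lam \<noteq> 0" "b \<noteq> x k" "p k = lam / (b - x k)"
  shows "lax_L x p lam k *v (\<chi> i. if i = 1 then 1 else 0) = (1 / (b - x k)) *s vv b"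
proof -
  define d1 where "d1 = b - x k"
  have d: "d1 \<noteq> 0" using assms unfolding d1_def by auto
  have bb: "b = x k + d1" unfolding d1_def by auto
  have e1: "p k = lam * (1/d1)" using assms unfolding d1_def by (simp add: field_simps)
  show ?thesis
    unfolding vec_eq_iff forall_2 lax_L_def vv_def bb
    using d assms(1)
    by (simp add: matrix_vector_mult_def sum_2 mat_def e1 field_simps power2_eq_square)
qed

lemma mono_vec: "monodromy x p lam (Suc n) *v v = lax_L x p lam (Suc n) *v (monodromy x p lam n *v v)"
  by (simp add: matrix_vector_mul_assoc)

lemma periodic_ind:
  assumes "lam \<noteq> 0"
    "\<forall>k\<in>{1..n}. yt k \<noteq> x k \<and> x k \<noteq> yt (k-1) \<and> p k = lam / (yt k - x k) + lam / (x k - yt (k-1))"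
  shows "monodromy x p lam n *v vv (yt 0) = (\<Prod>k=1..n. (yt (k-1) - x k) / (yt k - x k)) *s vv (yt n)"
  using assms(2)
proof (induction n)
  case 0
  then show ?case by simp
next
  case (Suc n)
  have IH: "monodromy x p lam n *v vv (yt 0) = (\<Prod>k=1..n. (yt (k-1) - x k) / (yt k - x k)) *s vv (yt n)"
    using Suc by auto
  have h: "yt (Suc n) \<noteq> x (Suc n)" "x (Suc n) \<noteq> yt n"
     "p (Suc n) = lam / (yt (Suc n) - x (Suc n)) + lam / (x (Suc n) - yt n)"
    using bspec[OF Suc.prems, of "Suc n"] by auto
  show ?case
    unfolding mono_vec IH using step[of lam "yt (Suc n)" x "Suc n" "yt n" p, OF assms(1) h] by (simp add: prod.cl_ivl_Suc)
qed

lemma open_ind: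
  assumes "lam \<noteq> 0" "n \<ge> 1" "xt 1 \<noteq> x 1" "p 1 = lam / (xt 1 - x 1)"
    "\<forall>k\<in>{2..n}. xt k \<noteq> x k \<and> x k \<noteq> xt (k-1) \<and> p k = lam / (xt k - x k) + lam / (x k - xt (k-1))"
  shows "monodromy x p lam n *v (\<chi> i. if i = 1 then 1 else 0)
     = ((\<Prod>k=2..n. (xt (k-1) - x k) / (xt k - x k)) / (xt 1 - x 1)) *s vv (xt n)"
  using assms(2,5)
proof (induction n rule: dec_induct)
  case base
  then show ?case using step0[of lam "xt 1" x 1 p, OF assms(1) assms(3,4)] by (simp add: mono_vec)
next
  case (step n)
  have IH: "monodromy x p lam n *v (\<chi> i. if i = 1 then 1 else 0)
     = ((\<Prod>k=2..n. (xt (k-1) - x k) / (xt k - x k)) / (xt 1 - x 1)) *s vv (xt n)"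
    using step by auto
  have h: "xt (Suc n) \<noteq> x (Suc n)" "x (Suc n) \<noteq> xt n"
     "p (Suc n) = lam / (xt (Suc n) - x (Suc n)) + lam / (x (Suc n) - xt n)"
    using bspec[OF step(4), of "Suc n"] step(1) by auto
  show ?case
    unfolding mono_vec IH using step.hyps step(1) Submission.step[of lam "xt (Suc n)" x "Suc n" "xt n" p, OF assms(1) h] by (simp add: prod.cl_ivl_Suc)
qed
theorem theorem12:
  fixes N :: nat and lam :: complex and x p :: "nat \<Rightarrow> complex"
  assumes "N \<ge> 2" and "lam \<noteq> 0"
  shows
   "(\<forall>xt :: nat \<Rightarrow> complex.
      ((\<forall>k\<in>{1..N}. xt k \<noteq> x k) \<and>
       (\<forall>k\<in>{1..N}. x k \<noteq> (if k = 1 then xt N else xt (k - 1))) \<and>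
       (\<forall>k\<in>{1..N}. p k = lam / (xt k - x k)
                         + lam / (x k - (if k = 1 then xt N else xt (k - 1)))))
      \<longrightarrow> is_eigenvalue (monodromy x p lam N)
            ((\<Prod>k=1..N. xt k - (if k = N then x 1 else x (k + 1))) / (\<Prod>k=1..N. xt k - x k)))
    \<and>
    (\<forall>xt :: nat \<Rightarrow> complex.
      ((\<forall>k\<in>{1..N}. xt k \<noteq> x k) \<and>
       (\<forall>k\<in>{2..N}. x k \<noteq> xt (k - 1)) \<and>
       p 1 = lam / (xt 1 - x 1) \<and>
       (\<forall>k\<in>{2..N}. p k = lam / (xt k - x k) + lam / (x k - xt (k - 1))))
      \<longrightarrow> monodromy x p lam N $ 2 $ 1
            = (\<Prod>k=1..N-1. xt k - x (k + 1)) / (\<Prod>k=1..N. xt k - x k))"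
proof (intro conjI allI impI)
  obtain M where NM: "N = Suc M" "M \<ge> 1" using assms(1) by (cases N) auto
  {
    fix xt :: "nat \<Rightarrow> complex"
    assume H: "(\<forall>k\<in>{1..N}. xt k \<noteq> x k) \<and>
       (\<forall>k\<in>{1..N}. x k \<noteq> (if k = 1 then xt N else xt (k - 1))) \<and>
       (\<forall>k\<in>{1..N}. p k = lam / (xt k - x k)
                         + lam / (x k - (if k = 1 then xt N else xt (k - 1))))"
    define yt where "yt k = (if k = 0 then xt N else xt k)" for k
    have hy: "\<forall>k\<in>{1..N}. yt k \<noteq> x k \<and> x k \<noteq> yt (k-1) \<and> p k = lam / (yt k - x k) + lam / (x k - yt (k-1))"
    proof
      fix k assume k: "k \<in> {1..N}"
      have "yt k = xt k" "yt (k-1) = (if k = 1 then xt N else xt (k - 1))" using k by (auto simp: yt_def)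
      then show "yt k \<noteq> x k \<and> x k \<noteq> yt (k-1) \<and> p k = lam / (yt k - x k) + lam / (x k - yt (k-1))"
        using H k by auto
    qed
    have E: "monodromy x p lam N *v vv (xt N) = (\<Prod>k=1..N. (yt (k-1) - x k) / (yt k - x k)) *s vv (xt N)"
    proof -
      have "yt 0 = xt N" "yt N = xt N" using NM by (auto simp: yt_def)
      then show ?thesis using periodic_ind[OF assms(2) hy] by simp
    qed
    have den: "(\<Prod>k=1..N. yt k - x k) = (\<Prod>k=1..N. xt k - x k)"
      by (rule prod.cong) (auto simp: yt_def)
    have num: "(\<Prod>k=1..N. yt (k-1) - x k) = (\<Prod>k=1..N. xt k - (if k = N then x 1 else x (k + 1)))"
    proof -
      have "(\<Prod>k=1..N. yt (k-1) - x k) = (yt 0 - x 1) * (\<Prod>k=Suc 1..Suc M. yt (k-1) - x k)"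
        unfolding NM(1) by (subst prod.atLeast_Suc_atMost) auto
      also have "(\<Prod>k=Suc 1..Suc M. yt (k-1) - x k) = (\<Prod>k=1..M. yt k - x (Suc k))"
        unfolding prod.shift_bounds_cl_Suc_ivl by simp
      also have "\<dots> = (\<Prod>k=1..M. xt k - (if k = N then x 1 else x (k + 1)))"
        by (rule prod.cong) (auto simp: yt_def NM)
      finally show ?thesis using NM by (simp add: prod.cl_ivl_Suc yt_def mult.commute)
    qed
    have "(\<Prod>k=1..N. (yt (k-1) - x k) / (yt k - x k))
       = (\<Prod>k=1..N. xt k - (if k = N then x 1 else x (k + 1))) / (\<Prod>k=1..N. xt k - x k)"
      unfolding prod_dividef num den ..
    moreover have "vv (xt N) \<noteq> 0"
    proof
      assume "vv (xt N) = 0"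
      then have "vv (xt N) $ 2 = 0" by simp
      then show False by (simp add: vv_def)
    qed
    ultimately show "is_eigenvalue (monodromy x p lam N)
            ((\<Prod>k=1..N. xt k - (if k = N then x 1 else x (k + 1))) / (\<Prod>k=1..N. xt k - x k))"
      unfolding is_eigenvalue_def using E by metis
  }
  {
    fix xt :: "nat \<Rightarrow> complex"
    assume H: "(\<forall>k\<in>{1..N}. xt k \<noteq> x k) \<and>
       (\<forall>k\<in>{2..N}. x k \<noteq> xt (k - 1)) \<and>
       p 1 = lam / (xt 1 - x 1) \<and>
       (\<forall>k\<in>{2..N}. p k = lam / (xt k - x k) + lam / (x k - xt (k - 1)))"
    have h5: "\<forall>k\<in>{2..N}. xt k \<noteq> x k \<and> x k \<noteq> xt (k-1) \<and> p k = lam / (xt k - x k) + lam / (x k - xt (k-1))"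
      using H by auto
    have E: "monodromy x p lam N *v (\<chi> i. if i = 1 then 1 else 0)
     = ((\<Prod>k=2..N. (xt (k-1) - x k) / (xt k - x k)) / (xt 1 - x 1)) *s vv (xt N)"
      using open_ind[OF assms(2) _ _ _ h5] H assms(1) by auto
    have ent: "monodromy x p lam N $ 2 $ 1 = (monodromy x p lam N *v (\<chi> i. if i = 1 then 1 else 0)) $ 2"
      by (simp add: matrix_vector_mult_def sum_2)
    have num: "(\<Prod>k=2..N. xt (k-1) - x k) = (\<Prod>k=1..N-1. xt k - x (k + 1))"
    proof -
      have "(\<Prod>k=Suc 1..Suc M. xt (k-1) - x k) = (\<Prod>k=1..M. xt k - x (k + 1))"
        unfolding prod.shift_bounds_cl_Suc_ivl by simp
      then show ?thesis unfolding Suc_1 NM(1) by simp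
    qed
    have den: "(\<Prod>k=1..N. xt k - x k) = (xt 1 - x 1) * (\<Prod>k=2..N. xt k - x k)"
    proof -
      have "1 \<le> N" using assms(1) by simp
      from prod.atLeast_Suc_atMost[OF this, of "\<lambda>k. xt k - x k"] show ?thesis unfolding Suc_1 .
    qed
    have c2: "((\<Prod>k=2..N. (xt (k-1) - x k) / (xt k - x k)) / (xt 1 - x 1) *s vv (xt N)) $ 2
       = (\<Prod>k=2..N. (xt (k-1) - x k) / (xt k - x k)) / (xt 1 - x 1)"
      by (simp add: vv_def)
    show "monodromy x p lam N $ 2 $ 1
            = (\<Prod>k=1..N-1. xt k - x (k + 1)) / (\<Prod>k=1..N. xt k - x k)"
      unfolding ent E c2 by (simp only: den prod_dividef num[symmetric] divide_divide_eq_left mult.commute)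
  }
qed

end
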